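(* Let $a\in C^1(\mathbb{R})$ be real valued, let $C>0$ with $a:=a(C^2)>0$, put $\omega=a^2/4$, $b:=2a'(C^2)C^2$, and assume the spectral condition $a'(C^2)\in(-\infty,0)\cup(0,a(C^2)/(\sqrt2C^2))$. Let $\mathbf{C}$ be the operator on $\mathbb{C}^2$-valued functions $$ \mathbf{C}=\begin{pmatrix}0&\mathbf{D}_2\\-\mathbf{D}_1&0\end{pmatrix},\quad \mathbf{D}_1=-\frac{d^2}{dx^2}+\omega-\delta(x)(a+b),\quad \mathbf{D}_2=-\frac{d^2}{dx^2}+\omega-\delta(x)a. $$ Let $\psi_\omega(x)=C(\omega)e^{-\sqrt\omega|x|}$ be the family of solitary waves near $\omega$ (with $C(\omega)$ the local inverse of $C\mapsto a(C^2)^2/4$), $\Phi_\omega=(\psi_\omega,0)$, $T_0=j\Phi_\omega=(0,\psi_\omega)$ and $T_1=\partial_\omega\Phi_\omega=(\partial_\omega\psi_\omega,0)$. Then the generalised null space of $\mathbf{C}$ is two dimensional, is spanned by $T_0,T_1$, and $$ \mathbf{C}T_0=0,\qquad \mathbf{C}T_1=T_0. $$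
   Context: $j=\begin{pmatrix}0&-1\\1&0\end{pmatrix}$. $\delta(x)$ is the Dirac distribution at $0$; $\delta(x)\cdot c$ applied to a function $f$ means $c f(0)\delta(x)$. The operator $\mathbf{C}=j^{-1}\mathbf{B}$ is the linearization (in real vector form, then complexified) of $i\dot\psi=-\psi''-\delta(x)a(|\psi(0)|^2)\psi(0)$ at the solitary wave $e^{i\omega t}\psi_\omega$. *)

theory Defs
  imports "HOL-Analysis.Analysis"
begin

definition d1 :: "(real \<Rightarrow> complex) \<Rightarrow> real \<Rightarrow> complex" where
  "d1 f x = vector_derivative f (at x)"

definition d2 :: "(real \<Rightarrow> complex) \<Rightarrow> real \<Rightarrow> complex" where
  "d2 f x = vector_derivative (d1 f) (at x)"

definition sq_integrable :: "(real \<Rightarrow> complex) \<Rightarrow> bool" where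
  "sq_integrable f \<longleftrightarrow> (\<lambda>x. (cmod (f x))\<^sup>2) integrable_on UNIV"

text \<open>Domain of the operator  -d^2/dx^2 + omega - alpha delta(x)  on L^2(R):
continuous, twice differentiable away from 0, f and f'' square integrable,
one-sided limits of f' at 0 exist and satisfy the jump condition
f'(0+) - f'(0-) = - alpha f(0).\<close>

definition delta_dom :: "real \<Rightarrow> (real \<Rightarrow> complex) \<Rightarrow> bool" where
  "delta_dom \<alpha> f \<longleftrightarrow>
     continuous_on UNIV f \<and>
     (\<forall>x. x \<noteq> 0 \<longrightarrow> f differentiable (at x) \<and> d1 f differentiable (at x)) \<and>
     (\<exists>l r. (d1 f \<longlongrightarrow> l) (at_left 0) \<and> (d1 f \<longlongrightarrow> r) (at_right 0) \<and>
            r - l = - complex_of_real \<alpha> * f 0) \<and>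
     sq_integrable f \<and> sq_integrable (d2 f)"

text \<open>Action of  -d^2/dx^2 + omega  (the delta part is encoded in the domain).
At the origin the value is taken to be the right limit (irrelevant a.e.; it makes
membership of the image in a domain, which requires continuity, meaningful).\<close>

definition delta_op :: "real \<Rightarrow> (real \<Rightarrow> complex) \<Rightarrow> real \<Rightarrow> complex" where
  "delta_op \<omega> f x =
     (let g = (\<lambda>y. - d2 f y + complex_of_real \<omega> * f y)
      in if x = 0 then Lim (at_right 0) g else g x)"

type_synonym vfun = "(real \<Rightarrow> complex) \<times> (real \<Rightarrow> complex)"

text \<open>The operator  C = [[0, D2], [-D1, 0]]  with D1 of delta strength a+b and
D2 of delta strength a.\<close>

definition Cdom :: "real \<Rightarrow> real \<Rightarrow> vfun \<Rightarrow> bool" where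
  "Cdom \<alpha>1 \<alpha>2 u \<longleftrightarrow> delta_dom \<alpha>1 (fst u) \<and> delta_dom \<alpha>2 (snd u)"

definition Cop :: "real \<Rightarrow> vfun \<Rightarrow> vfun" where
  "Cop \<omega> u = (delta_op \<omega> (snd u), (\<lambda>x. - delta_op \<omega> (fst u) x))"

fun Cdom_pow :: "nat \<Rightarrow> real \<Rightarrow> real \<Rightarrow> real \<Rightarrow> vfun \<Rightarrow> bool" where
  "Cdom_pow 0 \<omega> \<alpha>1 \<alpha>2 u = True"
| "Cdom_pow (Suc k) \<omega> \<alpha>1 \<alpha>2 u = (Cdom \<alpha>1 \<alpha>2 u \<and> Cdom_pow k \<omega> \<alpha>1 \<alpha>2 (Cop \<omega> u))"

definition gen_null_space :: "real \<Rightarrow> real \<Rightarrow> real \<Rightarrow> vfun set" where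
  "gen_null_space \<omega> \<alpha>1 \<alpha>2 =
     {u. \<exists>k. Cdom_pow k \<omega> \<alpha>1 \<alpha>2 u \<and> (Cop \<omega> ^^ k) u = (\<lambda>x. 0, \<lambda>x. 0)}"

definition vadd :: "vfun \<Rightarrow> vfun \<Rightarrow> vfun" where
  "vadd u v = (\<lambda>x. fst u x + fst v x, \<lambda>x. snd u x + snd v x)"

definition vscale :: "complex \<Rightarrow> vfun \<Rightarrow> vfun" where
  "vscale c u = (\<lambda>x. c * fst u x, \<lambda>x. c * snd u x)"

end

theory Submission
  imports Defs
begin


lemma exp_abs_integrable:
  fixes s :: real assumes s: "s > 0"
  shows "(\<lambda>x. exp (- s * \<bar>x\<bar>)) integrable_on UNIV"
proof -
  define f0 where "f0 = (\<lambda>x::real. if x \<in> {0..} then exp (- s * x) else 0)"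
  have "f0 integrable_on UNIV"
    unfolding f0_def using integrable_on_exp_minus_to_infinity[OF s, of 0]
    by (subst integrable_restrict_UNIV) simp
  then have "f0 absolutely_integrable_on UNIV"
    by (rule nonnegative_absolutely_integrable_1) (simp add: f0_def)
  then have i1: "integrable lebesgue f0"
    by (simp add: set_integrable_def)
  then have "integrable lebesgue (\<lambda>x. f0 (0 + (-1) * x))"
    by (intro lebesgue_integrable_real_affine) auto
  then have i2: "integrable lebesgue (\<lambda>x. f0 (- x))" by simp
  have g: "(\<lambda>x. f0 x + f0 (-x)) integrable_on UNIV"
    by (intro integrable_add integrable_on_lebesgue i1 i2)
  show ?thesis
  proof (rule integrable_on_all_intervals_UNIV[where g="\<lambda>x. f0 x + f0 (-x)", OF _ _ g])
    fix a b :: real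
    show "(\<lambda>x. exp (- s * \<bar>x\<bar>)) integrable_on cbox a b"
      by (intro integrable_continuous continuous_intros)
  next
    fix x :: real
    show "norm (exp (- s * \<bar>x\<bar>)) \<le> f0 x + f0 (- x)"
      by (cases "x \<ge> 0") (auto simp: f0_def)
  qed
qed



definition qe :: "complex \<Rightarrow> complex \<Rightarrow> complex \<Rightarrow> real \<Rightarrow> real \<Rightarrow> complex" where
  "qe c0 c1 c2 s t = (c0 + c1 * of_real t + c2 * (of_real t)\<^sup>2) * of_real (exp (- s * t))"

lemma qe_alt: "qe c0 c1 c2 s t = (\<lambda>z. (c0 + c1 * z + c2 * z\<^sup>2) * exp (- of_real s * z)) (of_real t)"
  by (simp add: qe_def flip: exp_of_real)

lemma qe_deriv:
  "(qe c0 c1 c2 s has_vector_derivative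
      qe (c1 - of_real s * c0) (2 * c2 - of_real s * c1) (- of_real s * c2) s t) (at t within S)"
proof -
  have "((\<lambda>z. (c0 + c1 * z + c2 * z\<^sup>2) * exp (- of_real s * z)) has_field_derivative
      (c1 + c2 * (2 * of_real t)) * exp (- of_real s * of_real t) + (c0 + c1 * of_real t + c2 * (of_real t)\<^sup>2) * (exp (- of_real s * of_real t) * (- of_real s))) (at (of_real t))"
    by (auto intro!: derivative_eq_intros)
  from has_vector_derivative_real_field[OF this, where s=S]
  show ?thesis
    unfolding qe_alt[abs_def] qe_alt
    by (simp add: algebra_simps power2_eq_square)
qed

lemma qe_bound:
  assumes s: "s > 0" and t: "t \<ge> 0"
  shows "(cmod (qe c0 c1 c2 s t))\<^sup>2 \<le> ((cmod c0 + cmod c1 + cmod c2) / (min 1 (s/4))\<^sup>2)\<^sup>2 * exp (- s * t)"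
proof -
  define K where "K = cmod c0 + cmod c1 + cmod c2"
  define m where "m = min 1 (s/4)"
  have m: "m > 0" "m \<le> 1" "m \<le> s/4" using s by (auto simp: m_def)
  have K: "K \<ge> 0" by (simp add: K_def)
  have "cmod (c0 + c1 * of_real t + c2 * (of_real t)\<^sup>2) \<le> cmod c0 + cmod c1 * t + cmod c2 * t\<^sup>2"
    using t by (auto intro!: order_trans[OF norm_triangle_ineq] add_mono simp: norm_mult norm_power)
  also have "\<dots> \<le> K * (1 + t)\<^sup>2"
  proof -
    have "cmod c1 * t \<le> cmod c1 * (1+t)\<^sup>2" "cmod c2 * t\<^sup>2 \<le> cmod c2 * (1+t)\<^sup>2" "cmod c0 \<le> cmod c0 * (1+t)\<^sup>2"
      using t by (auto intro!: mult_left_mono simp: power2_eq_square algebra_simps)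
    then show ?thesis by (simp add: K_def algebra_simps)
  qed
  finally have p: "cmod (c0 + c1 * of_real t + c2 * (of_real t)\<^sup>2) \<le> K * (1 + t)\<^sup>2" .
  have e: "m * (1 + t) \<le> exp (s * t / 4)"
  proof -
    have "m * t \<le> s / 4 * t" using m t by (intro mult_right_mono) auto
    then have "m * (1 + t) \<le> 1 + s * t / 4" using m by (simp add: algebra_simps)
    also have "\<dots> \<le> exp (s * t / 4)" by (rule exp_ge_add_one_self)
    finally show ?thesis .
  qed
  have "(cmod (qe c0 c1 c2 s t))\<^sup>2 = (cmod (c0 + c1 * of_real t + c2 * (of_real t)\<^sup>2))\<^sup>2 * exp (- s * t)^2"
    by (simp add: qe_def norm_mult power_mult_distrib)
  also have "\<dots> \<le> (K * (1 + t)\<^sup>2)\<^sup>2 * exp (- s * t)^2"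
    by (intro mult_right_mono power_mono p) auto
  also have "\<dots> = K\<^sup>2 / m^4 * ((m * (1 + t))^4 * exp (- s * t)^2)"
    using m by (simp add: field_simps power2_eq_square power4_eq_xxxx)
  also have "\<dots> \<le> K\<^sup>2 / m^4 * (exp (s * t / 4) ^ 4 * exp (- s * t)^2)"
    using m t K e by (intro mult_left_mono mult_right_mono power_mono) auto
  also have "exp (s * t / 4) ^ 4 * exp (- s * t)^2 = exp (- s * t)"
    by (simp flip: exp_of_nat_mult exp_add)
  finally show ?thesis by (simp add: K_def m_def power2_eq_square power4_eq_xxxx field_simps)
qed

lemma qe_cont: "continuous_on S (qe c0 c1 c2 s)"
  unfolding qe_def by (intro continuous_intros)

lemma sq_integrable_qe_abs:
  assumes s: "s > 0" and eq: "\<And>x. x \<noteq> 0 \<Longrightarrow> f x = qe c0 c1 c2 s \<bar>x\<bar>"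
  shows "sq_integrable f"
proof -
  define M where "M = ((cmod c0 + cmod c1 + cmod c2) / (min 1 (s/4))\<^sup>2)\<^sup>2"
  have "(\<lambda>x. (cmod (qe c0 c1 c2 s \<bar>x\<bar>))\<^sup>2) integrable_on UNIV"
  proof (rule integrable_on_all_intervals_UNIV[where g="\<lambda>x. M * exp (- s * \<bar>x\<bar>)"])
    fix a b :: real
    show "(\<lambda>x. (cmod (qe c0 c1 c2 s \<bar>x\<bar>))\<^sup>2) integrable_on cbox a b"
      unfolding qe_def by (intro integrable_continuous continuous_intros)
  next
    fix x :: real
    show "norm ((cmod (qe c0 c1 c2 s \<bar>x\<bar>))\<^sup>2) \<le> M * exp (- s * \<bar>x\<bar>)"
      using qe_bound[OF s, of "\<bar>x\<bar>" c0 c1 c2] by (simp add: M_def)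
  next
    show "(\<lambda>x. M * exp (- s * \<bar>x\<bar>)) integrable_on UNIV"
      using integrable_cmul[OF exp_abs_integrable[OF s], of M] by simp
  qed
  then show ?thesis
    unfolding sq_integrable_def
    by (rule integrable_spike[where S="{0}"]) (auto simp: eq)
qed

lemma qe_deriv_neg:
  "((\<lambda>y. qe c0 c1 c2 s (- y)) has_vector_derivative
      - qe (c1 - of_real s * c0) (2 * c2 - of_real s * c1) (- of_real s * c2) s (- t)) (at t within S)"
proof -
  have "((\<lambda>z. (c0 + c1 * (- z) + c2 * (- z)\<^sup>2) * exp (- of_real s * (- z))) has_field_derivative
      (c1 * (-1) + c2 * (2 * (- of_real t) * (-1))) * exp (- of_real s * (- of_real t)) + (c0 + c1 * (- of_real t) + c2 * (- of_real t)\<^sup>2) * (exp (- of_real s * (- of_real t)) * (- of_real s * (-1)))) (at (of_real t))"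
    by (auto intro!: derivative_eq_intros)
  from has_vector_derivative_real_field[OF this, where s=S]
  show ?thesis
    unfolding qe_alt
    by (simp add: algebra_simps power2_eq_square)
qed



lemma qe_abs_deriv:
  assumes x: "x \<noteq> 0"
  shows "((\<lambda>y. qe c0 c1 c2 s \<bar>y\<bar>) has_vector_derivative
          of_real (sgn x) * qe (c1 - of_real s * c0) (2 * c2 - of_real s * c1) (- of_real s * c2) s \<bar>x\<bar>) (at x)"
proof (cases "x > 0")
  case True
  have "((\<lambda>y. qe c0 c1 c2 s \<bar>y\<bar>) has_vector_derivative
          qe (c1 - of_real s * c0) (2 * c2 - of_real s * c1) (- of_real s * c2) s x) (at x)"
    by (rule has_vector_derivative_transform_within_open[OF qe_deriv, where S="{0<..}"])
       (use True in auto)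
  then show ?thesis using True by simp
next
  case False
  with x have "x < 0" by auto
  then have "((\<lambda>y. qe c0 c1 c2 s \<bar>y\<bar>) has_vector_derivative
          - qe (c1 - of_real s * c0) (2 * c2 - of_real s * c1) (- of_real s * c2) s (-x)) (at x)"
    by (intro has_vector_derivative_transform_within_open[OF qe_deriv_neg, where S="{..<0}"]) auto
  then show ?thesis using \<open>x < 0\<close> by simp
qed

lemma qe_abs_d1:
  assumes x: "x \<noteq> 0"
  shows "d1 (\<lambda>y. qe c0 c1 c2 s \<bar>y\<bar>) x =
          of_real (sgn x) * qe (c1 - of_real s * c0) (2 * c2 - of_real s * c1) (- of_real s * c2) s \<bar>x\<bar>"
  unfolding d1_def by (rule vector_derivative_at[OF qe_abs_deriv[OF x]])

lemma qe_abs_d1_deriv: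
  assumes x: "x \<noteq> 0"
  shows "(d1 (\<lambda>y. qe c0 c1 c2 s \<bar>y\<bar>) has_vector_derivative
          qe (2 * c2 - of_real s * c1 - of_real s * (c1 - of_real s * c0))
             (2 * (- of_real s * c2) - of_real s * (2 * c2 - of_real s * c1))
             (- of_real s * (- of_real s * c2)) s \<bar>x\<bar>) (at x)"
proof -
  let ?g = "\<lambda>y. of_real (sgn y) * qe (c1 - of_real s * c0) (2 * c2 - of_real s * c1) (- of_real s * c2) s \<bar>y\<bar>"
  have "(?g has_vector_derivative
          qe (2 * c2 - of_real s * c1 - of_real s * (c1 - of_real s * c0))
             (2 * (- of_real s * c2) - of_real s * (2 * c2 - of_real s * c1))
             (- of_real s * (- of_real s * c2)) s \<bar>x\<bar>) (at x)"
  proof (cases "x > 0")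
    case True
    show ?thesis
      apply (subst abs_of_pos[OF True])
      by (rule has_vector_derivative_transform_within_open[OF qe_deriv, where S="{0<..}"]) (use True in auto)
  next
    case False
    with x have "x < 0" by auto
    have "((\<lambda>y. - qe (c1 - of_real s * c0) (2 * c2 - of_real s * c1) (- of_real s * c2) s (- y)) has_vector_derivative
         - (- qe (2 * c2 - of_real s * c1 - of_real s * (c1 - of_real s * c0))
             (2 * (- of_real s * c2) - of_real s * (2 * c2 - of_real s * c1))
             (- of_real s * (- of_real s * c2)) s (-x))) (at x)"
      by (intro has_vector_derivative_minus qe_deriv_neg)
    then show ?thesis
      apply (subst abs_of_neg[OF \<open>x < 0\<close>])
      apply (simp only: minus_minus)
      by (rule has_vector_derivative_transform_within_open[where S="{..<0}"]) (use \<open>x < 0\<close> in auto)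
  qed
  then show ?thesis
    by (rule has_vector_derivative_transform_within_open[where S="-{0}"]) (use x qe_abs_d1 in auto)
qed

lemma qe_abs_d2:
  assumes x: "x \<noteq> 0"
  shows "d2 (\<lambda>y. qe c0 c1 c2 s \<bar>y\<bar>) x =
          qe (2 * c2 - of_real s * c1 - of_real s * (c1 - of_real s * c0))
             (2 * (- of_real s * c2) - of_real s * (2 * c2 - of_real s * c1))
             (- of_real s * (- of_real s * c2)) s \<bar>x\<bar>"
  unfolding d2_def by (rule vector_derivative_at[OF qe_abs_d1_deriv[OF x]])

lemma qe_abs_d1_right:
  "(d1 (\<lambda>y. qe c0 c1 c2 s \<bar>y\<bar>) \<longlongrightarrow> c1 - of_real s * c0) (at_right 0)"
proof -
  have "((\<lambda>y. qe (c1 - of_real s * c0) (2 * c2 - of_real s * c1) (- of_real s * c2) s y) \<longlongrightarrow>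
        qe (c1 - of_real s * c0) (2 * c2 - of_real s * c1) (- of_real s * c2) s 0) (at_right 0)"
    using qe_cont[of UNIV] by (meson UNIV_I continuous_on_def filterlim_at_split tendsto_within_subset top_greatest)
  then have "((\<lambda>y. qe (c1 - of_real s * c0) (2 * c2 - of_real s * c1) (- of_real s * c2) s y) \<longlongrightarrow>
        c1 - of_real s * c0) (at_right 0)" by (simp add: qe_def)
  then show ?thesis
    by (rule Lim_transform_eventually) (auto simp: eventually_at_right_less eventually_at_filter qe_abs_d1 intro!: eventually_mono[OF eventually_at_right_less])
qed

lemma qe_abs_d1_left:
  "(d1 (\<lambda>y. qe c0 c1 c2 s \<bar>y\<bar>) \<longlongrightarrow> - (c1 - of_real s * c0)) (at_left 0)"
proof -
  have "((\<lambda>y. - qe (c1 - of_real s * c0) (2 * c2 - of_real s * c1) (- of_real s * c2) s (- y)) \<longlongrightarrow>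
        - qe (c1 - of_real s * c0) (2 * c2 - of_real s * c1) (- of_real s * c2) s (- 0)) (at_left 0)"
    unfolding qe_def by (intro tendsto_intros)
  then have "((\<lambda>y. - qe (c1 - of_real s * c0) (2 * c2 - of_real s * c1) (- of_real s * c2) s (- y)) \<longlongrightarrow>
        - (c1 - of_real s * c0)) (at_left 0)" by (simp add: qe_def)
  then show ?thesis
    by (rule Lim_transform_eventually) (unfold eventually_at_filter, intro always_eventually, auto simp: qe_abs_d1)
qed

lemma qe_abs_cont: "continuous_on S (\<lambda>y. qe c0 c1 c2 s \<bar>y\<bar>)"
  unfolding qe_def by (intro continuous_intros)

lemma delta_dom_qe:
  assumes s: "s > 0" and jump: "2 * (c1 - of_real s * c0) = - of_real \<beta> * c0"
  shows "delta_dom \<beta> (\<lambda>y. qe c0 c1 c2 s \<bar>y\<bar>)"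
  unfolding delta_dom_def
proof (intro conjI allI impI exI)
  show "continuous_on UNIV (\<lambda>y. qe c0 c1 c2 s \<bar>y\<bar>)" by (rule qe_abs_cont)
  fix x :: real assume x: "x \<noteq> 0"
  show "(\<lambda>y. qe c0 c1 c2 s \<bar>y\<bar>) differentiable at x"
    by (rule differentiableI_vector[OF qe_abs_deriv[OF x]])
  show "d1 (\<lambda>y. qe c0 c1 c2 s \<bar>y\<bar>) differentiable at x"
    by (rule differentiableI_vector[OF qe_abs_d1_deriv[OF x]])
next
  show "(d1 (\<lambda>y. qe c0 c1 c2 s \<bar>y\<bar>) \<longlongrightarrow> - (c1 - of_real s * c0)) (at_left 0)" by (rule qe_abs_d1_left)
  show "(d1 (\<lambda>y. qe c0 c1 c2 s \<bar>y\<bar>) \<longlongrightarrow> (c1 - of_real s * c0)) (at_right 0)" by (rule qe_abs_d1_right)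
  show "c1 - of_real s * c0 - - (c1 - of_real s * c0) = - of_real \<beta> * qe c0 c1 c2 s \<bar>0\<bar>"
    using jump by (simp add: qe_def algebra_simps)
  show "sq_integrable (\<lambda>y. qe c0 c1 c2 s \<bar>y\<bar>)"
    by (rule sq_integrable_qe_abs[OF s]) auto
  show "sq_integrable (d2 (\<lambda>y. qe c0 c1 c2 s \<bar>y\<bar>))"
    by (rule sq_integrable_qe_abs[OF s]) (rule qe_abs_d2)
qed

lemma delta_op_qe:
  "delta_op (s\<^sup>2) (\<lambda>y. qe c0 c1 c2 s \<bar>y\<bar>) =
     (\<lambda>x. qe (2 * of_real s * c1 - 2 * c2) (4 * of_real s * c2) 0 s \<bar>x\<bar>)"
proof -
  have eq: "- d2 (\<lambda>y. qe c0 c1 c2 s \<bar>y\<bar>) y + complex_of_real (s\<^sup>2) * qe c0 c1 c2 s \<bar>y\<bar> =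
        qe (2 * of_real s * c1 - 2 * c2) (4 * of_real s * c2) 0 s \<bar>y\<bar>" if "y \<noteq> 0" for y
    unfolding qe_abs_d2[OF that] by (simp add: qe_def algebra_simps power2_eq_square)
  have lim: "((\<lambda>y. - d2 (\<lambda>y. qe c0 c1 c2 s \<bar>y\<bar>) y + complex_of_real (s\<^sup>2) * qe c0 c1 c2 s \<bar>y\<bar>) \<longlongrightarrow>
          qe (2 * of_real s * c1 - 2 * c2) (4 * of_real s * c2) 0 s \<bar>0\<bar>) (at_right 0)"
  proof (rule Lim_transform_eventually)
    show "((\<lambda>y. qe (2 * of_real s * c1 - 2 * c2) (4 * of_real s * c2) 0 s \<bar>y\<bar>) \<longlongrightarrow>
          qe (2 * of_real s * c1 - 2 * c2) (4 * of_real s * c2) 0 s \<bar>0\<bar>) (at_right 0)"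
      unfolding qe_def by (intro tendsto_intros)
    show "\<forall>\<^sub>F x in at_right 0. qe (2 * of_real s * c1 - 2 * c2) (4 * of_real s * c2) 0 s \<bar>x\<bar> =
        - d2 (\<lambda>y. qe c0 c1 c2 s \<bar>y\<bar>) x + complex_of_real (s\<^sup>2) * qe c0 c1 c2 s \<bar>x\<bar>"
      unfolding eventually_at_filter by (intro always_eventually allI impI) (rule eq[symmetric], simp)
  qed
  show ?thesis
  proof (rule ext)
    fix x :: real
    show "delta_op (s\<^sup>2) (\<lambda>y. qe c0 c1 c2 s \<bar>y\<bar>) x =
       qe (2 * of_real s * c1 - 2 * c2) (4 * of_real s * c2) 0 s \<bar>x\<bar>"
    proof (cases "x = 0")
      case True
      then show ?thesis unfolding delta_op_def Let_def
        using tendsto_Lim[OF trivial_limit_at_right_real lim] by simp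
    next
      case False
      then show ?thesis unfolding delta_op_def Let_def using eq[OF False] by simp
    qed
  qed
qed



lemma exp_cancel: "complex_of_real (exp a) * (complex_of_real (exp (-a)) * z) = z"
proof -
  have "complex_of_real (exp a) * complex_of_real (exp (-a)) = 1"
    by (simp flip: of_real_mult exp_add)
  then show ?thesis by (simp add: mult.assoc[symmetric])
qed

lemma exp_double: "complex_of_real (exp (2 * s * x)) = complex_of_real (exp (s * x)) * complex_of_real (exp (s * x))"
proof -
  have "exp (2 * s * x) = exp (s * x) * exp (s * x)"
    by (metis exp_add mult_2 mult.assoc)
  then show ?thesis by (metis of_real_mult)
qed

lemma ode_half_line_general:
  fixes h h1 h2 :: "real \<Rightarrow> complex"
  assumes s: "s > 0"
    and d: "\<And>x. x > 0 \<Longrightarrow> (h has_vector_derivative h1 x) (at x)"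
    and dd: "\<And>x. x > 0 \<Longrightarrow> (h1 has_vector_derivative h2 x) (at x)"
    and ode: "\<And>x. x > 0 \<Longrightarrow> h2 x = of_real (s\<^sup>2) * h x"
  shows "\<exists>A K. \<forall>x>0. h x = A * of_real (exp (- s * x)) + K * of_real (exp (s * x))"
proof -
  define k where "k x = h1 x + of_real s * h x" for x
  have dk: "(k has_vector_derivative of_real s * k x) (at x)" if "x > 0" for x
  proof -
    have "(k has_vector_derivative h2 x + of_real s * h1 x) (at x)"
      unfolding k_def[abs_def]
      by (rule derivative_eq_intros dd d that refl)+ (simp add: algebra_simps)
    then show ?thesis using ode[OF that] by (simp add: k_def algebra_simps power2_eq_square)
  qed
  define m where "m x = of_real (exp (- s * x)) * k x" for x
  have dm: "(m has_vector_derivative 0) (at x within {0<..})" if "x > 0" for x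
  proof -
    have "(m has_vector_derivative of_real (exp (- s * x)) * (of_real s * k x) + of_real (exp (- s * x) * (- s)) * k x) (at x)"
      unfolding m_def[abs_def]
      by (intro has_vector_derivative_mult has_vector_derivative_of_real dk that)
         (auto intro!: derivative_eq_intros)
    moreover have "of_real (exp (- s * x)) * (of_real s * k x) + of_real (exp (- s * x) * (- s)) * k x = 0"
      by (simp add: algebra_simps)
    ultimately show ?thesis by (metis has_vector_derivative_at_within)
  qed
  obtain K0 where K0: "\<And>x. x \<in> {0<..} \<Longrightarrow> m x = K0"
    using has_vector_derivative_zero_constant[of "{0<..}" m] dm by auto
  have kK: "k x = K0 * of_real (exp (s * x))" if "x > 0" for x
  proof -
    have "of_real (exp (- s * x)) * k x = K0" using K0[of x] that by (simp add: m_def)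
    then have "of_real (exp (s * x)) * (of_real (exp (- s * x)) * k x) = K0 * of_real (exp (s * x))"
      by simp
    also have "of_real (exp (s * x)) * (of_real (exp (- s * x)) * k x) = k x"
      using exp_cancel[of "s * x"] by simp
    finally show ?thesis .
  qed
  define n where "n x = of_real (exp (s * x)) * h x - K0 / of_real (2 * s) * of_real (exp (2 * s * x))" for x
  have dn: "(n has_vector_derivative 0) (at x within {0<..})" if "x > 0" for x
  proof -
    have "(n has_vector_derivative
        (of_real (exp (s * x)) * h1 x + of_real (exp (s * x) * s) * h x) -
         K0 / of_real (2 * s) * of_real (exp (2 * s * x) * (2 * s))) (at x)"
      unfolding n_def[abs_def]
      by (intro has_vector_derivative_mult has_vector_derivative_of_real has_vector_derivative_diff
            d that has_vector_derivative_mult[where f="\<lambda>_. K0 / of_real (2 * s)" and f'=0, simplified])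
         (auto intro!: derivative_eq_intros)
    also have "(of_real (exp (s * x)) * h1 x + of_real (exp (s * x) * s) * h x) -
         K0 / of_real (2 * s) * of_real (exp (2 * s * x) * (2 * s)) = of_real (exp (s * x)) * k x - K0 * of_real (exp (2 * s * x))"
      using s by (simp add: k_def algebra_simps)
    also have "\<dots> = 0"
      using kK[OF that] unfolding exp_double by (simp add: algebra_simps)
    finally show ?thesis by (rule has_vector_derivative_at_within)
  qed
  obtain A0 where A0: "\<And>x. x \<in> {0<..} \<Longrightarrow> n x = A0"
    using has_vector_derivative_zero_constant[of "{0<..}" n] dn by auto
  have "h x = A0 * of_real (exp (- s * x)) + K0 / of_real (2 * s) * of_real (exp (s * x))" if "x > 0" for x
  proof -
    have e: "of_real (exp (s * x)) * h x = A0 + K0 / of_real (2 * s) * of_real (exp (2 * s * x))"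
      using A0[of x] that by (simp add: n_def algebra_simps)
    have "h x = of_real (exp (- s * x)) * (of_real (exp (s * x)) * h x)"
      using exp_cancel[of "- s * x" "h x"] by simp
    also have "\<dots> = A0 * of_real (exp (- s * x)) + K0 / of_real (2 * s) * of_real (exp (- s * x) * exp (2 * s * x))"
      unfolding e by (simp add: algebra_simps)
    also have "exp (- s * x) * exp (2 * s * x) = exp (s * x)"
      by (simp flip: exp_add)
    finally show ?thesis .
  qed
  then show ?thesis by blast
qed



lemma growth_contra:
  fixes f :: "real \<Rightarrow> complex" and K :: complex
  assumes s: "s > 0"
    and feq: "\<And>x. x > 0 \<Longrightarrow> f x = qe A c1 c2 s x + K * of_real (exp (s * x))"
    and int: "\<And>a b. 0 \<le> a \<Longrightarrow> (\<lambda>x. (cmod (f x))\<^sup>2) integrable_on {a..b}"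
    and bnd: "\<And>a b. 0 \<le> a \<Longrightarrow> integral {a..b} (\<lambda>x. (cmod (f x))\<^sup>2) \<le> B"
  shows "K = 0"
proof (rule ccontr)
  assume K0: "K \<noteq> 0"
  define M where "M = ((cmod A + cmod c1 + cmod c2) / (min 1 (s/4))\<^sup>2)\<^sup>2"
  have M0: "M \<ge> 0" by (simp add: M_def)
  have qb: "cmod (qe A c1 c2 s x) \<le> sqrt M" if "x \<ge> 0" for x
  proof -
    have "(cmod (qe A c1 c2 s x))\<^sup>2 \<le> M * exp (- s * x)"
      using qe_bound[OF s that] by (simp add: M_def)
    also have "\<dots> \<le> M * 1" using M0 s that by (intro mult_left_mono) auto
    finally show ?thesis by (simp add: real_le_rsqrt)
  qed
  define X where "X = sqrt M / (cmod K * s) + 1"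
  have "sqrt M / (cmod K * s) \<ge> 0" using K0 s M0 by (intro divide_nonneg_nonneg) auto
  then have X: "X > 0" by (simp add: X_def)
  have big: "(cmod K)\<^sup>2 \<le> (cmod (f x))\<^sup>2" if "x \<ge> X" for x
  proof -
    have x0: "x > 0" using X that by simp
    have "sqrt M / (cmod K * s) \<le> x" using that X_def by simp
    then have "sqrt M \<le> cmod K * s * x" using K0 s by (simp add: field_simps)
    also have "cmod K * s * x \<le> cmod K * (exp (s * x) - 1)"
    proof -
      have "s * x \<le> exp (s * x) - 1" using exp_ge_add_one_self[of "s * x"] by linarith
      from mult_left_mono[OF this, of "cmod K"] show ?thesis by (simp add: mult.assoc)
    qed
    finally have "cmod K + sqrt M \<le> cmod K * exp (s * x)" by (simp add: algebra_simps)
    also have "cmod K * exp (s * x) = cmod (K * of_real (exp (s * x)))" by (simp add: norm_mult)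
    also have "\<dots> \<le> cmod (f x) + cmod (qe A c1 c2 s x)"
      using feq[OF x0] norm_triangle_ineq4[of "f x" "qe A c1 c2 s x"] by (simp add: algebra_simps)
    finally have "cmod K \<le> cmod (f x)" using qb[of x] x0 by simp
    then show ?thesis by (simp add: power_mono)
  qed
  define n where "n = B / (cmod K)\<^sup>2 + 1"
  have n: "n > 0" and nB: "n * (cmod K)\<^sup>2 > B"
  proof -
    have "integral {X..X} (\<lambda>x. (cmod (f x))\<^sup>2) \<le> B" using bnd[of X X] X by simp
    then have "B \<ge> 0" by simp
    then show "n > 0" unfolding n_def by (simp add: add_nonneg_pos)
    show "n * (cmod K)\<^sup>2 > B" using K0 by (simp add: n_def field_simps)
  qed
  have "n * (cmod K)\<^sup>2 = integral {X..X+n} (\<lambda>x. (cmod K)\<^sup>2)"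
    using n by simp
  also have "\<dots> \<le> integral {X..X+n} (\<lambda>x. (cmod (f x))\<^sup>2)"
    by (intro integral_le int big) (use X in auto)
  also have "\<dots> \<le> B" using bnd X by simp
  finally show False using nB by simp
qed

lemma half_line_unique:
  fixes f fa fb :: "real \<Rightarrow> complex"
  assumes s: "s > 0"
    and d: "\<And>x. x > 0 \<Longrightarrow> (f has_vector_derivative fa x) (at x)"
    and dd: "\<And>x. x > 0 \<Longrightarrow> (fa has_vector_derivative fb x) (at x)"
    and ode: "\<And>x. x > 0 \<Longrightarrow> - fb x + of_real (s\<^sup>2) * f x = qe r0 r1 0 s x"
    and int: "\<And>a b. 0 \<le> a \<Longrightarrow> (\<lambda>x. (cmod (f x))\<^sup>2) integrable_on {a..b}"
    and bnd: "\<And>a b. 0 \<le> a \<Longrightarrow> integral {a..b} (\<lambda>x. (cmod (f x))\<^sup>2) \<le> B"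
  shows "\<exists>A. \<forall>x>0. f x = qe A ((r0 + 2 * (r1 / of_real (4 * s))) / of_real (2 * s)) (r1 / of_real (4 * s)) s x"
proof -
  define p2 where "p2 = r1 / of_real (4 * s)"
  define p1 where "p1 = (r0 + 2 * p2) / of_real (2 * s)"
  let ?P = "qe 0 p1 p2 s"
  let ?P1 = "qe (p1 - of_real s * 0) (2 * p2 - of_real s * p1) (- of_real s * p2) s"
  let ?P2 = "qe (2 * p2 - of_real s * p1 - of_real s * (p1 - of_real s * 0))
                (2 * (- of_real s * p2) - of_real s * (2 * p2 - of_real s * p1))
                (- of_real s * (- of_real s * p2)) s"
  define h where "h x = f x - ?P x" for x
  define h1 where "h1 x = fa x - ?P1 x" for x
  define h2 where "h2 x = fb x - ?P2 x" for x
  have part: "- ?P2 x + of_real (s\<^sup>2) * ?P x = qe r0 r1 0 s x" for x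
    using s by (simp add: qe_def p1_def p2_def field_simps power2_eq_square)
  obtain A K where AK: "\<And>x. x > 0 \<Longrightarrow> h x = A * of_real (exp (- s * x)) + K * of_real (exp (s * x))"
  proof -
    have "\<exists>A K. \<forall>x>0. h x = A * of_real (exp (- s * x)) + K * of_real (exp (s * x))"
    proof (rule ode_half_line_general[OF s])
      fix x :: real assume x: "x > 0"
      show "(h has_vector_derivative h1 x) (at x)"
        unfolding h_def[abs_def] h1_def by (intro has_vector_derivative_diff d x qe_deriv)
      show "(h1 has_vector_derivative h2 x) (at x)"
        unfolding h1_def[abs_def] h2_def by (intro has_vector_derivative_diff dd x qe_deriv)
      show "h2 x = of_real (s\<^sup>2) * h x"
        using ode[OF x] part[of x] by (simp add: h_def h2_def algebra_simps)
    qed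
    then show ?thesis using that by blast
  qed
  have feq: "f x = qe A p1 p2 s x + K * of_real (exp (s * x))" if "x > 0" for x
    using AK[OF that] by (simp add: h_def qe_def algebra_simps)
  have "K = 0" by (rule growth_contra[OF s feq int bnd])
  then have "\<forall>x>0. f x = qe A p1 p2 s x" using feq by simp
  then show ?thesis unfolding p1_def p2_def by blast
qed



lemma reflect_deriv:
  assumes "(f has_vector_derivative f') (at (- x))"
  shows "((\<lambda>y. f (- y)) has_vector_derivative - f') (at x)"
proof -
  have u: "((\<lambda>y. - y) has_vector_derivative (-1)) (at x)"
    using has_vector_derivative_minus[OF has_vector_derivative_id[of "at x"]] by simp
  from vector_diff_chain_at[OF u, of f f'] assms show ?thesis by (simp add: o_def)
qed

lemma delta_unique:
  fixes f :: "real \<Rightarrow> complex"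
  assumes s: "s > 0" and dom: "delta_dom \<beta> f"
    and ode: "\<And>x. x \<noteq> 0 \<Longrightarrow> - d2 f x + of_real (s\<^sup>2) * f x = qe r0 r1 0 s \<bar>x\<bar>"
  shows "f = (\<lambda>x. qe (f 0) ((r0 + 2 * (r1 / of_real (4 * s))) / of_real (2 * s)) (r1 / of_real (4 * s)) s \<bar>x\<bar>)
     \<and> 2 * ((r0 + 2 * (r1 / of_real (4 * s))) / of_real (2 * s) - of_real s * f 0) = - of_real \<beta> * f 0"
proof -
  define p2 where "p2 = r1 / of_real (4 * s)"
  define p1 where "p1 = (r0 + 2 * p2) / of_real (2 * s)"
  note dd = dom[unfolded delta_dom_def]
  have cont: "continuous_on UNIV f" using dd by blast
  have df: "(f has_vector_derivative d1 f x) (at x)" if "x \<noteq> 0" for x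
    using dd that by (simp add: d1_def vector_derivative_works[symmetric])
  have ddf: "(d1 f has_vector_derivative d2 f x) (at x)" if "x \<noteq> 0" for x
    using dd that by (simp add: d2_def vector_derivative_works[symmetric])
  obtain l r where lr: "(d1 f \<longlongrightarrow> l) (at_left 0)" "(d1 f \<longlongrightarrow> r) (at_right 0)" "r - l = - of_real \<beta> * f 0"
    using dd by blast
  have sq: "(\<lambda>x. (cmod (f x))\<^sup>2) integrable_on UNIV" using dd by (simp add: sq_integrable_def)
  define B where "B = integral UNIV (\<lambda>x. (cmod (f x))\<^sup>2)"
  have intab: "(\<lambda>x. (cmod (f x))\<^sup>2) integrable_on {a..b}" for a b
    by (rule integrable_on_subinterval[OF sq]) auto
  have bndab: "integral {a..b} (\<lambda>x. (cmod (f x))\<^sup>2) \<le> B" for a b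
    unfolding B_def by (rule integral_subset_le) (auto intro: intab sq)
  obtain Ar where Ar: "\<And>x. x > 0 \<Longrightarrow> f x = qe Ar p1 p2 s x"
  proof -
    have "\<exists>A. \<forall>x>0. f x = qe A p1 p2 s x"
      unfolding p1_def p2_def
      by (rule half_line_unique[OF s, where fa="d1 f" and fb="d2 f" and B=B])
         (use df ddf ode intab bndab in auto)
    then show ?thesis using that by blast
  qed
  obtain Al where Al: "\<And>x. x > 0 \<Longrightarrow> f (- x) = qe Al p1 p2 s x"
  proof -
    have "\<exists>A. \<forall>x>0. (\<lambda>y. f (- y)) x = qe A p1 p2 s x"
      unfolding p1_def p2_def
    proof (rule half_line_unique[OF s, where fa="\<lambda>y. - d1 f (- y)" and fb="\<lambda>y. d2 f (- y)" and B=B])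
      fix x :: real assume x: "x > 0"
      show "((\<lambda>y. f (- y)) has_vector_derivative - d1 f (- x)) (at x)"
        by (rule reflect_deriv) (use df x in simp)
      have "((\<lambda>y. d1 f (- y)) has_vector_derivative - d2 f (- x)) (at x)"
        by (rule reflect_deriv) (use ddf x in simp)
      then show "((\<lambda>y. - d1 f (- y)) has_vector_derivative d2 f (- x)) (at x)"
        using has_vector_derivative_minus by fastforce
      show "- d2 f (- x) + complex_of_real (s\<^sup>2) * f (- x) = qe r0 r1 0 s x"
        using ode[of "- x"] x by simp
    next
      fix a b :: real assume a: "0 \<le> a"
      have "(\<lambda>x. (cmod (f x))\<^sup>2) integrable_on {- b..- a}" by (rule intab)
      then show "(\<lambda>x. (cmod (f (- x)))\<^sup>2) integrable_on {a..b}"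
        using Henstock_Kurzweil_Integration.integrable_reflect_real[where f="\<lambda>x. (cmod (f x))\<^sup>2" and a="-b" and b="-a"] by simp
      have "integral {a..b} (\<lambda>x. (cmod (f (- x)))\<^sup>2) = integral {-b..-a} (\<lambda>x. (cmod (f x))\<^sup>2)"
        using Henstock_Kurzweil_Integration.integral_reflect_real[where f="\<lambda>x. (cmod (f x))\<^sup>2" and a="-b" and b="-a"] by simp
      then show "integral {a..b} (\<lambda>x. (cmod (f (- x)))\<^sup>2) \<le> B" using bndab by simp
    qed
    then show ?thesis using that by auto
  qed
  have fr: "(f \<longlongrightarrow> f 0) (at_right 0)" and fl: "(f \<longlongrightarrow> f 0) (at_left 0)"
    using cont by (auto simp: continuous_on_def filterlim_at_split)
  have "((\<lambda>x. qe Ar p1 p2 s x) \<longlongrightarrow> qe Ar p1 p2 s 0) (at_right 0)"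
    unfolding qe_def by (intro tendsto_intros)
  then have "((\<lambda>x. qe Ar p1 p2 s x) \<longlongrightarrow> Ar) (at_right 0)" by (simp add: qe_def)
  then have "(f \<longlongrightarrow> Ar) (at_right 0)"
    by (rule Lim_transform_eventually)
       (unfold eventually_at_filter, intro always_eventually, auto simp: Ar)
  with fr have r0: "f 0 = Ar" by (intro tendsto_unique[OF trivial_limit_at_right_real])
  have "((\<lambda>x. qe Al p1 p2 s (- x)) \<longlongrightarrow> qe Al p1 p2 s (- 0)) (at_left 0)"
    unfolding qe_def by (intro tendsto_intros)
  then have "((\<lambda>x. qe Al p1 p2 s (- x)) \<longlongrightarrow> Al) (at_left 0)" by (simp add: qe_def)
  then have "(f \<longlongrightarrow> Al) (at_left 0)"
    by (rule Lim_transform_eventually)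
       (unfold eventually_at_filter, intro always_eventually, auto simp: Al[of "- _", simplified])
  with fl have l0: "f 0 = Al" by (intro tendsto_unique[OF trivial_limit_at_left_real])
  have feq: "f = (\<lambda>x. qe (f 0) p1 p2 s \<bar>x\<bar>)"
  proof
    fix x :: real
    consider "x > 0" | "x < 0" | "x = 0" by linarith
    then show "f x = qe (f 0) p1 p2 s \<bar>x\<bar>"
    proof cases
      case 1 then show ?thesis using Ar[OF 1] r0 by simp
    next
      case 2 then show ?thesis using Al[of "- x"] l0 by simp
    next
      case 3 then show ?thesis by (simp add: qe_def)
    qed
  qed
  have "r = p1 - of_real s * f 0"
    using tendsto_unique[OF trivial_limit_at_right_real lr(2) qe_abs_d1_right[of "f 0" p1 p2 s, folded feq]] by simp
  moreover have "l = - (p1 - of_real s * f 0)"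
    using tendsto_unique[OF trivial_limit_at_left_real lr(1) qe_abs_d1_left[of "f 0" p1 p2 s, folded feq]] by simp
  ultimately have "2 * (p1 - of_real s * f 0) = - of_real \<beta> * f 0" using lr(3) by simp
  with feq show ?thesis unfolding p1_def p2_def by simp
qed



lemma qe_scale: "c * qe a0 a1 a2 s t = qe (c * a0) (c * a1) (c * a2) s t"
  by (simp add: qe_def algebra_simps)

lemma qe_zero: "qe 0 0 0 s t = 0" by (simp add: qe_def)

lemma Cfun_deriv:
  fixes a a' :: "real \<Rightarrow> real" and C :: real and Cfun :: "real \<Rightarrow> real"
  assumes a_deriv: "\<forall>x. (a has_real_derivative a' x) (at x)"
      and a'0: "a' (C\<^sup>2) \<noteq> 0"
      and C_pos: "C > 0"
      and a_pos: "a (C\<^sup>2) > 0"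
      and Cfun_at: "Cfun ((a (C\<^sup>2))\<^sup>2 / 4) = C"
      and Cfun_cont: "isCont Cfun ((a (C\<^sup>2))\<^sup>2 / 4)"
      and Cfun_inv: "\<exists>e>0. \<forall>w. \<bar>w - (a (C\<^sup>2))\<^sup>2 / 4\<bar> < e \<longrightarrow>
                        (a ((Cfun w)\<^sup>2))\<^sup>2 / 4 = w"
  shows "(Cfun has_real_derivative 1 / (a (C\<^sup>2) * a' (C\<^sup>2) * C)) (at ((a (C\<^sup>2))\<^sup>2 / 4))"
proof -
  from Cfun_inv obtain e where e1: "e > 0" and e2: "\<forall>w. \<bar>w - (a (C\<^sup>2))\<^sup>2 / 4\<bar> < e \<longrightarrow> (a ((Cfun w)\<^sup>2))\<^sup>2 / 4 = w"
    by (elim exE conjE)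
  note e = e1 e2[rule_format]
  let ?w = "(a (C\<^sup>2))\<^sup>2 / 4"
  have der0: "((\<lambda>c. (a (c\<^sup>2))\<^sup>2 / 4) has_real_derivative (2 * a (C\<^sup>2) * (a' (C\<^sup>2) * (2 * C))) / 4) (at (Cfun ?w))"
    unfolding Cfun_at
  proof -
    have sq: "((\<lambda>c. c\<^sup>2) has_real_derivative 2 * C) (at C)"
      using DERIV_power[OF DERIV_ident, where n=2 and x=C and s=UNIV] by simp
    have ac: "((\<lambda>c. a (c\<^sup>2)) has_real_derivative a' (C\<^sup>2) * (2 * C)) (at C)"
      by (rule DERIV_chain2[OF a_deriv[rule_format] sq])
    from DERIV_cdivide[OF DERIV_power[OF ac, of 2], of 4]
    show "((\<lambda>c. (a (c\<^sup>2))\<^sup>2 / 4) has_real_derivative (2 * a (C\<^sup>2) * (a' (C\<^sup>2) * (2 * C))) / 4) (at C)"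
      by (simp add: algebra_simps)
  qed
  have eq: "(2 * a (C\<^sup>2) * (a' (C\<^sup>2) * (2 * C))) / 4 = a (C\<^sup>2) * a' (C\<^sup>2) * C" by simp
  have "((\<lambda>c. (a (c\<^sup>2))\<^sup>2 / 4) has_real_derivative a (C\<^sup>2) * a' (C\<^sup>2) * C) (at (Cfun ?w))"
    using der0 unfolding eq .
  note der = this
  have "(Cfun has_real_derivative inverse (a (C\<^sup>2) * a' (C\<^sup>2) * C)) (at ?w)"
  proof -
    have "a (C\<^sup>2) * a' (C\<^sup>2) * C \<noteq> 0" using a'0 C_pos a_pos by simp
    moreover have "?w - e < ?w" "?w < ?w + e" using e1 by auto
    moreover have "\<And>y. ?w - e < y \<Longrightarrow> y < ?w + e \<Longrightarrow> (a ((Cfun y)\<^sup>2))\<^sup>2 / 4 = y"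
      by (rule e(2)) (simp add: abs_less_iff)
    ultimately show ?thesis by (rule DERIV_inverse_function[OF der _ _ _ _ Cfun_cont]) 
  qed
  then show ?thesis by (simp add: inverse_eq_divide)
qed



lemma T1_deriv:
  fixes Cfun :: "real \<Rightarrow> real"
  assumes Cder: "(Cfun has_real_derivative Dd) (at \<omega>)" and w: "\<omega> > 0"
  shows "deriv (\<lambda>w. Cfun w * exp (- sqrt w * \<bar>x\<bar>)) \<omega> =
         Dd * exp (- sqrt \<omega> * \<bar>x\<bar>) - Cfun \<omega> * \<bar>x\<bar> / (2 * sqrt \<omega>) * exp (- sqrt \<omega> * \<bar>x\<bar>)"
proof -
  have sq: "(sqrt has_real_derivative inverse (sqrt \<omega>) / 2) (at \<omega>)"
    by (rule DERIV_real_sqrt[OF w])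
  have e: "((\<lambda>w. exp (- sqrt w * \<bar>x\<bar>)) has_real_derivative
            exp (- sqrt \<omega> * \<bar>x\<bar>) * (- (inverse (sqrt \<omega>) / 2) * \<bar>x\<bar>)) (at \<omega>)"
    by (rule DERIV_chain2[OF DERIV_exp]) (rule DERIV_cmult_right[OF DERIV_minus[OF sq]])
  have "((\<lambda>w. Cfun w * exp (- sqrt w * \<bar>x\<bar>)) has_real_derivative
      Dd * exp (- sqrt \<omega> * \<bar>x\<bar>) + (exp (- sqrt \<omega> * \<bar>x\<bar>) * (- (inverse (sqrt \<omega>) / 2) * \<bar>x\<bar>)) * Cfun \<omega>) (at \<omega>)"
    by (rule DERIV_mult[OF Cder e])
  from DERIV_imp_deriv[OF this] show ?thesis
    using w by (simp add: field_simps)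
qed

lemma delta_op_ode:
  assumes "delta_op \<omega> f = g" "x \<noteq> 0"
  shows "- d2 f x + of_real \<omega> * f x = g x"
  using assms unfolding delta_op_def Let_def by auto

lemma aux_cancel: "2 * (P - of_real s * u) = - of_real (2 * s) * u \<Longrightarrow> P = (0::complex)"
  by (simp add: algebra_simps)

lemma key_step:
  fixes s C Dd bb :: real and u :: vfun and c0 c1 :: complex
  assumes s: "s > 0" and C: "C \<noteq> 0" and R2: "s * bb * Dd = C" and R3: "4 * s\<^sup>2 * Dd \<noteq> C"
    and dom: "Cdom (2 * s + bb) (2 * s) u"
    and op: "Cop (s\<^sup>2) u = ((\<lambda>x. qe (c1 * of_real Dd) (c1 * of_real (- C / (2 * s))) 0 s \<bar>x\<bar>),
                              (\<lambda>x. qe (c0 * of_real C) 0 0 s \<bar>x\<bar>))"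
  shows "\<exists>d0 d1. u = ((\<lambda>x. qe (d1 * of_real Dd) (d1 * of_real (- C / (2 * s))) 0 s \<bar>x\<bar>),
                      (\<lambda>x. qe (d0 * of_real C) 0 0 s \<bar>x\<bar>))"
proof -
  obtain u1 u2 where u: "u = (u1, u2)" by (cases u)
  have dom1: "delta_dom (2 * s + bb) u1" and dom2: "delta_dom (2 * s) u2"
    using dom by (auto simp: Cdom_def u)
  have op2: "delta_op (s\<^sup>2) u2 = (\<lambda>x. qe (c1 * of_real Dd) (c1 * of_real (- C / (2 * s))) 0 s \<bar>x\<bar>)"
    using op by (simp add: Cop_def u)
  have op1': "(\<lambda>x. - delta_op (s\<^sup>2) u1 x) = (\<lambda>x. qe (c0 * of_real C) 0 0 s \<bar>x\<bar>)"
    using op by (simp add: Cop_def u)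
  have op1: "delta_op (s\<^sup>2) u1 = (\<lambda>x. qe (- (c0 * of_real C)) 0 0 s \<bar>x\<bar>)"
  proof
    fix x show "delta_op (s\<^sup>2) u1 x = qe (- (c0 * of_real C)) 0 0 s \<bar>x\<bar>"
      using fun_cong[OF op1', of x] unfolding qe_def by (metis (no_types, lifting) add.inverse_inverse mult_minus_left add_0_right mult_zero_left)
  qed
  define r0 where "r0 = c1 * of_real Dd"
  define r1 where "r1 = c1 * of_real (- C / (2 * s))"
  have U2: "u2 = (\<lambda>x. qe (u2 0) ((r0 + 2 * (r1 / of_real (4 * s))) / of_real (2 * s)) (r1 / of_real (4 * s)) s \<bar>x\<bar>)
     \<and> 2 * ((r0 + 2 * (r1 / of_real (4 * s))) / of_real (2 * s) - of_real s * u2 0) = - of_real (2 * s) * u2 0"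
    by (rule delta_unique[OF s dom2]) (use delta_op_ode[OF op2] in \<open>simp add: r0_def r1_def\<close>)
  have P1: "(r0 + 2 * (r1 / of_real (4 * s))) / of_real (2 * s) = c1 * of_real ((Dd - C / (4 * s\<^sup>2)) / (2 * s))"
    using s by (simp add: r0_def r1_def field_simps power2_eq_square)
  have "(r0 + 2 * (r1 / of_real (4 * s))) / of_real (2 * s) = 0"
    using conjunct2[OF U2] aux_cancel by blast
  moreover have "(Dd - C / (4 * s\<^sup>2)) / (2 * s) \<noteq> 0"
    using s R3 by (simp add: field_simps)
  ultimately have c10: "c1 = 0" unfolding P1 by (metis mult_eq_0_iff of_real_eq_0_iff)
  have u2eq: "u2 = (\<lambda>x. qe (u2 0 / of_real C * of_real C) 0 0 s \<bar>x\<bar>)"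
    using U2 C by (simp add: c10 r0_def r1_def)
  have U1: "u1 = (\<lambda>x. qe (u1 0) ((- (c0 * of_real C) + 2 * (0 / of_real (4 * s))) / of_real (2 * s)) (0 / of_real (4 * s)) s \<bar>x\<bar>)
     \<and> 2 * ((- (c0 * of_real C) + 2 * (0 / of_real (4 * s))) / of_real (2 * s) - of_real s * u1 0) = - of_real (2 * s + bb) * u1 0"
    by (rule delta_unique[OF s dom1]) (use delta_op_ode[OF op1] in simp)
  have "- (c0 * of_real C) / of_real s = - of_real bb * u1 0"
    using conjunct2[OF U1] s by (simp add: field_simps)
  then have "u1 0 = c0 * of_real C / of_real (s * bb)"
    using s R2 C by (auto simp: field_simps)
  also have "\<dots> = c0 * of_real Dd"
    using s R2 C by (auto simp: field_simps simp flip: of_real_mult)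
  finally have u10: "u1 0 = c0 * of_real Dd" .
  have u1eq: "u1 = (\<lambda>x. qe (c0 * of_real Dd) (c0 * of_real (- C / (2 * s))) 0 s \<bar>x\<bar>)"
    apply (subst conjunct1[OF U1])
    using s by (simp add: u10 field_simps)
  show ?thesis using u u1eq u2eq by blast
qed



lemma dom_Psi:
  assumes s: "s > 0"
  shows "delta_dom (2 * s) (\<lambda>x. qe (c * of_real C) 0 0 s \<bar>x\<bar>)"
  by (rule delta_dom_qe[OF s]) (simp add: algebra_simps)

lemma dom_Phi:
  assumes s: "s > 0" and R2: "s * bb * Dd = C"
  shows "delta_dom (2 * s + bb) (\<lambda>x. qe (c * of_real Dd) (c * of_real (- C / (2 * s))) 0 s \<bar>x\<bar>)"
proof (rule delta_dom_qe[OF s])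
  have "complex_of_real C = of_real s * of_real bb * of_real Dd" using R2 by (metis of_real_mult)
  then show "2 * (c * complex_of_real (- C / (2 * s)) - complex_of_real s * (c * complex_of_real Dd)) =
    - complex_of_real (2 * s + bb) * (c * complex_of_real Dd)"
    using s by (simp add: field_simps)
qed

lemma op_Psi:
  "delta_op (s\<^sup>2) (\<lambda>x. qe (c * of_real C) 0 0 s \<bar>x\<bar>) = (\<lambda>x. 0)"
  unfolding delta_op_qe by (simp add: qe_def)

lemma op_Phi:
  assumes s: "s > 0"
  shows "delta_op (s\<^sup>2) (\<lambda>x. qe (c * of_real Dd) (c * of_real (- C / (2 * s))) 0 s \<bar>x\<bar>) =
         (\<lambda>x. - qe (c * of_real C) 0 0 s \<bar>x\<bar>)"
  unfolding delta_op_qe using s by (simp add: qe_def field_simps)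



theorem lemma6p1:
  fixes a a' :: "real \<Rightarrow> real" and C :: real and Cfun :: "real \<Rightarrow> real"
  assumes a_deriv: "\<forall>x. (a has_real_derivative a' x) (at x)"
      and a'_cont: "continuous_on UNIV a'"
      and C_pos: "C > 0"
      and a_pos: "a (C\<^sup>2) > 0"
      and spectral: "a' (C\<^sup>2) < 0 \<or> (0 < a' (C\<^sup>2) \<and> a' (C\<^sup>2) < a (C\<^sup>2) / (sqrt 2 * C\<^sup>2))"
      and Cfun_at: "Cfun ((a (C\<^sup>2))\<^sup>2 / 4) = C"
      and Cfun_cont: "isCont Cfun ((a (C\<^sup>2))\<^sup>2 / 4)"
      and Cfun_inv: "\<exists>e>0. \<forall>w. \<bar>w - (a (C\<^sup>2))\<^sup>2 / 4\<bar> < e \<longrightarrow>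
                        (a ((Cfun w)\<^sup>2))\<^sup>2 / 4 = w"
  shows "let \<omega> = (a (C\<^sup>2))\<^sup>2 / 4;
             \<alpha> = a (C\<^sup>2);
             b = 2 * a' (C\<^sup>2) * C\<^sup>2;
             T0 = ((\<lambda>x. 0), (\<lambda>x. complex_of_real (Cfun \<omega> * exp (- sqrt \<omega> * \<bar>x\<bar>))));
             T1 = ((\<lambda>x. complex_of_real
                        (deriv (\<lambda>w. Cfun w * exp (- sqrt w * \<bar>x\<bar>)) \<omega>)), (\<lambda>x. 0))
         in Cdom (\<alpha> + b) \<alpha> T0 \<and> Cdom (\<alpha> + b) \<alpha> T1 \<and>
            Cop \<omega> T0 = ((\<lambda>x. 0), (\<lambda>x. 0)) \<and>
            Cop \<omega> T1 = T0 \<and>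
            (\<forall>c0 c1. vadd (vscale c0 T0) (vscale c1 T1) = ((\<lambda>x. 0), (\<lambda>x. 0))
                       \<longrightarrow> c0 = 0 \<and> c1 = 0) \<and>
            gen_null_space \<omega> (\<alpha> + b) \<alpha> = {vadd (vscale c0 T0) (vscale c1 T1) | c0 c1. True}"
proof -
  define \<alpha> where "\<alpha> = a (C\<^sup>2)"
  have a'0: "a' (C\<^sup>2) \<noteq> 0" using spectral by auto
  have \<alpha>_pos: "\<alpha> > 0" using a_pos by (simp add: \<alpha>_def)
  define \<omega> where "\<omega> = \<alpha>\<^sup>2 / 4"
  define s where "s = sqrt \<omega>"
  have "\<omega> = (\<alpha> / 2)\<^sup>2" by (simp add: \<omega>_def power_divide)
  then have s_eq: "s = \<alpha> / 2" using \<alpha>_pos by (simp add: s_def)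
  have s_pos: "s > 0" using \<alpha>_pos s_eq by simp
  have s2: "s\<^sup>2 = \<omega>" by (simp add: s_eq \<omega>_def power_divide)
  have \<alpha>s: "\<alpha> = 2 * s" using s_eq by simp
  have w_pos: "\<omega> > 0" using s2 s_pos by auto
  define bb where "bb = 2 * a' (C\<^sup>2) * C\<^sup>2"
  define Dd where "Dd = 1 / (\<alpha> * a' (C\<^sup>2) * C)"
  have R2: "s * bb * Dd = C"
    using \<alpha>_pos a'0 C_pos by (simp add: s_eq bb_def Dd_def field_simps power2_eq_square)
  have R3: "4 * s\<^sup>2 * Dd \<noteq> C"
  proof
    assume "4 * s\<^sup>2 * Dd = C"
    then have "\<alpha> = a' (C\<^sup>2) * C\<^sup>2"
      using \<alpha>_pos a'0 C_pos by (simp add: s_eq Dd_def field_simps power2_eq_square)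
    moreover have "a' (C\<^sup>2) * C\<^sup>2 < \<alpha>"
    proof (cases "a' (C\<^sup>2) < 0")
      case True
      have "a' (C\<^sup>2) * C\<^sup>2 < 0" by (rule mult_neg_pos) (use True C_pos in auto)
      then show ?thesis using \<alpha>_pos by linarith
    next
      case False
      then have "a' (C\<^sup>2) < \<alpha> / (sqrt 2 * C\<^sup>2)" using spectral by (simp add: \<alpha>_def)
      then have "a' (C\<^sup>2) * C\<^sup>2 < \<alpha> / sqrt 2" using C_pos by (simp add: field_simps)
      also have "\<alpha> / sqrt 2 \<le> \<alpha>" using \<alpha>_pos by (simp add: field_simps)
      finally show ?thesis .
    qed
    ultimately show False by simp
  qed
  have bb0: "bb \<noteq> 0" using a'0 C_pos by (simp add: bb_def)
  have Cder: "(Cfun has_real_derivative Dd) (at \<omega>)"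
    using Cfun_deriv[OF a_deriv a'0 C_pos a_pos Cfun_at Cfun_cont Cfun_inv]
    by (simp add: Dd_def \<omega>_def \<alpha>_def)
  have Cw: "Cfun \<omega> = C" using Cfun_at by (simp add: \<omega>_def \<alpha>_def)
  define \<Psi> where "\<Psi> c = (\<lambda>x::real. qe (c * of_real C) 0 0 s \<bar>x\<bar>)" for c
  define \<Phi> where "\<Phi> c = (\<lambda>x::real. qe (c * of_real Dd) (c * of_real (- C / (2 * s))) 0 s \<bar>x\<bar>)" for c
  have T0eq: "(\<lambda>x. complex_of_real (Cfun \<omega> * exp (- sqrt \<omega> * \<bar>x\<bar>))) = \<Psi> 1"
    by (simp add: \<Psi>_def qe_def Cw flip: s_def)
  have T1eq: "(\<lambda>x. complex_of_real (deriv (\<lambda>w. Cfun w * exp (- sqrt w * \<bar>x\<bar>)) \<omega>)) = \<Phi> 1"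
  proof
    fix x :: real
    show "complex_of_real (deriv (\<lambda>w. Cfun w * exp (- sqrt w * \<bar>x\<bar>)) \<omega>) = \<Phi> 1 x"
      unfolding T1_deriv[OF Cder w_pos] using s_pos
      by (simp add: \<Phi>_def qe_def Cw field_simps flip: s_def)
  qed
  have Psi0: "\<Psi> 0 = (\<lambda>x. 0)" and Phi0: "\<Phi> 0 = (\<lambda>x. 0)"
    by (simp_all add: \<Psi>_def \<Phi>_def qe_def)
  have combo: "vadd (vscale c0 ((\<lambda>x. 0), \<Psi> 1)) (vscale c1 (\<Phi> 1, (\<lambda>x. 0))) = (\<Phi> c1, \<Psi> c0)" for c0 c1
    by (simp add: vadd_def vscale_def \<Psi>_def \<Phi>_def qe_scale)
  have domPsi: "delta_dom \<alpha> (\<Psi> c)" for c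
    unfolding \<Psi>_def \<alpha>s by (rule dom_Psi[OF s_pos])
  have domPhi: "delta_dom (\<alpha> + bb) (\<Phi> c)" for c
    unfolding \<Phi>_def \<alpha>s by (rule dom_Phi[OF s_pos R2])
  have opPsi: "delta_op \<omega> (\<Psi> c) = (\<lambda>x. 0)" for c
    unfolding \<Psi>_def s2[symmetric] by (rule op_Psi)
  have opPhi: "delta_op \<omega> (\<Phi> c) = (\<lambda>x. - \<Psi> c x)" for c
    unfolding \<Phi>_def \<Psi>_def s2[symmetric] by (rule op_Phi[OF s_pos])
  have Cop_combo: "Cop \<omega> (\<Phi> c1, \<Psi> c0) = (\<Phi> 0, \<Psi> c1)" for c0 c1
    by (simp add: Cop_def opPsi opPhi Phi0)
  have Cdom_combo: "Cdom (\<alpha> + bb) \<alpha> (\<Phi> c1, \<Psi> c0)" for c0 c1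
    by (simp add: Cdom_def domPsi domPhi)
  have Dd0: "Dd \<noteq> 0" using \<alpha>_pos a'0 C_pos by (simp add: Dd_def)
  have indep: "c0 = 0 \<and> c1 = 0" if "(\<Phi> c1, \<Psi> c0) = ((\<lambda>x. 0), (\<lambda>x. 0))" for c0 c1
  proof -
    have "\<Phi> c1 0 = 0" "\<Psi> c0 0 = 0" using that by auto
    then show ?thesis using Dd0 C_pos by (simp add: \<Phi>_def \<Psi>_def qe_def)
  qed
  have sub: "\<exists>c0 c1. u = (\<Phi> c1, \<Psi> c0)"
    if "Cdom_pow k \<omega> (\<alpha> + bb) \<alpha> u" "(Cop \<omega> ^^ k) u = ((\<lambda>x. 0), (\<lambda>x. 0))" for k u
    using that
  proof (induction k arbitrary: u)
    case 0
    then have "u = (\<Phi> 0, \<Psi> 0)" using Psi0 Phi0 by simp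
    then show ?case by blast
  next
    case (Suc k)
    have du: "Cdom (\<alpha> + bb) \<alpha> u" and dk: "Cdom_pow k \<omega> (\<alpha> + bb) \<alpha> (Cop \<omega> u)"
      using Suc.prems(1) by auto
    have "(Cop \<omega> ^^ k) (Cop \<omega> u) = ((\<lambda>x. 0), (\<lambda>x. 0))"
      using Suc.prems(2) by (simp add: funpow_Suc_right del: funpow.simps)
    from Suc.IH[OF dk this] obtain c0 c1 where cu: "Cop \<omega> u = (\<Phi> c1, \<Psi> c0)" by blast
    have "\<exists>d0 d1. u = ((\<lambda>x. qe (d1 * of_real Dd) (d1 * of_real (- C / (2 * s))) 0 s \<bar>x\<bar>),
                      (\<lambda>x. qe (d0 * of_real C) 0 0 s \<bar>x\<bar>))"
    proof (rule key_step[OF s_pos _ R2 R3])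
      show "C \<noteq> 0" using C_pos by simp
      show "Cdom (2 * s + bb) (2 * s) u" using du by (simp add: \<alpha>s)
      show "Cop (s\<^sup>2) u = ((\<lambda>x. qe (c1 * of_real Dd) (c1 * of_real (- C / (2 * s))) 0 s \<bar>x\<bar>),
                              (\<lambda>x. qe (c0 * of_real C) 0 0 s \<bar>x\<bar>))"
        using cu by (simp add: s2 \<Phi>_def \<Psi>_def)
    qed
    then show ?case by (simp add: \<Phi>_def \<Psi>_def)
  qed
  have gns: "gen_null_space \<omega> (\<alpha> + bb) \<alpha> = {(\<Phi> c1, \<Psi> c0) | c0 c1. True}"
  proof (intro set_eqI iffI)
    fix u assume "u \<in> gen_null_space \<omega> (\<alpha> + bb) \<alpha>"
    then obtain k where "Cdom_pow k \<omega> (\<alpha> + bb) \<alpha> u" "(Cop \<omega> ^^ k) u = ((\<lambda>x. 0), (\<lambda>x. 0))"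
      by (auto simp: gen_null_space_def)
    from sub[OF this] show "u \<in> {(\<Phi> c1, \<Psi> c0) | c0 c1. True}" by blast
  next
    fix u assume "u \<in> {(\<Phi> c1, \<Psi> c0) | c0 c1. True}"
    then obtain c0 c1 where u: "u = (\<Phi> c1, \<Psi> c0)" by blast
    have cz: "Cop \<omega> ((\<lambda>x. 0), \<Psi> c1) = ((\<lambda>x. 0), (\<lambda>x. 0))"
      using Cop_combo[of 0 c1] by (simp add: Psi0 Phi0)
    have "Cdom_pow 2 \<omega> (\<alpha> + bb) \<alpha> u"
      by (simp add: numeral_2_eq_2 u Cop_combo Cdom_combo)
    moreover have "(Cop \<omega> ^^ 2) u = ((\<lambda>x. 0), (\<lambda>x. 0))"
      by (simp add: numeral_2_eq_2 u Cop_combo Phi0 cz)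
    ultimately show "u \<in> gen_null_space \<omega> (\<alpha> + bb) \<alpha>"
      unfolding gen_null_space_def by blast
  qed
  show ?thesis
    unfolding Let_def \<alpha>_def[symmetric] \<omega>_def[symmetric] bb_def[symmetric] T0eq T1eq combo
    using Cdom_combo[of 0 1] Cdom_combo[of 1 0] Cop_combo[of 1 0] Cop_combo[of 0 1] indep gns
    by (simp add: Psi0 Phi0, blast)
qed


end
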